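(* Let $\mathcal A\subset\mathbb R^n$ be compact with diameter $D_{\mathcal A}<\infty$ and $\mathcal X=\mathrm{conv}(\mathcal A)$ be $\alpha$-strongly convex for some $\alpha>0$. Let $f$ be convex and differentiable with $L$-Lipschitz gradient. Run the AC-FW algorithm with the closed-loop Frank-Wolfe subroutine and a damping sequence satisfying Condition (D), let $\eta\in(1,2)$, and let $\{h_t\}_{t\ge0}$ be the elements of $\mathcal G\cap\mathcal I_\eta$ in increasing order. Then for every $t\ge0$, $$f(x_{h_{t+1}})-f(x^\star)\le\max\left\{\frac{\eta}{2},\ 1-\left(1-\frac{\eta}{2}\right)\frac{\alpha\|\nabla f(x_{h_t})\|_2}{8L}\right\}\bigl(f(x_{h_t})-f(x^\star)\bigr).$$ If in addition $f$ is $\mu$-strongly convex for some $\mu>0$, then for every $t\ge0$, $$f(x_{h_{t+1}})-f(x^\star)\le\max\left\{\frac{\eta}{2},\ 1-\left(1-\frac{\eta}{2}\right)\frac{\alpha\sqrt{\mu\,(f(x_{h_t})-f(x^\star))}}{8\sqrt2\,L}\right\}\bigl(f(x_{h_t})-f(x^\star)\bigr).$$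
   Context: $D_{\mathcal A}:=\sup_{x,y\in\mathcal A}\|x-y\|_2$; $\|\nabla f(x)-\nabla f(y)\|_2\le L\|x-y\|_2$ for all $x,y\in\mathbb R^n$. $x^\star$ is an optimal solution of $\min_{x\in\mathcal X}f(x)$. $\mathcal X$ is $\alpha$-strongly convex if for all $\rho\in[0,1]$, $x,y\in\mathcal X$ and $z\in\mathbb R^n$ with $\|z\|_2\le1$: $\rho x+(1-\rho)y+\frac{\rho(1-\rho)\alpha\|x-y\|_2^2}{2}z\in\mathcal X$. $f$ is $\mu$-strongly convex if $f(y)\ge f(x)+\nabla f(x)^\top(y-x)+\frac\mu2\|y-x\|_2^2$ for all $x,y$. For $x\ne y$, $\ell(x,y):=2|f(y)-f(x)-\nabla f(x)^\top(y-x)|/\|y-x\|_2^2$, $\ell(x,x):=0$. AC-FW algorithm with closed-loop Frank-Wolfe subroutine: given $\{r_t\}_{t\ge0}$, pick $x_{-1}\in\mathcal A$, $x_0\in\arg\min_{v\in\mathcal A}\nabla f(x_{-1})^\top v$, $L_0:=\ell(x_{-1},x_0)$. For $t=0,1,\dots$: $v_t\in\arg\min_{v\in\mathcal A}\nabla f(x_t)^\top v$; $d_t:=x_t-v_t$, $\gamma_t^{\max}:=1$; $\gamma_t:=\min\{\nabla f(x_t)^\top d_t/(L_t\|d_t\|_2^2),\gamma_t^{\max}\}$; $\bar x_{t+1}:=x_t-\gamma_td_t$; $L_{t+1}:=\max\{\ell(x_t,\bar x_{t+1}),r_tL_t\}$; $x_{t+1}:=\bar x_{t+1}$ if $f(\bar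 x_{t+1})<f(x_t)$, else $x_{t+1}:=x_t$. $\mathcal I_\eta:=\{t\ge0:L_{t+1}\le\eta L_t\}$; $\mathcal G:=\{t\ge0:\gamma_t^{\max}\ge1\text{ or }\gamma_t<\gamma_t^{\max}\}$ (here $\mathcal G$ is all of $\mathbb Z_+$). Condition (D): $r_t\in(0,1]$ for all $t$ and $\prod_{t\ge0}r_t\in(0,1]$. *)

theory Defs
  imports "HOL-Analysis.Analysis"
begin

definition strongly_convex_set :: "real \<Rightarrow> 'a::euclidean_space set \<Rightarrow> bool" where
  "strongly_convex_set \<alpha> X \<longleftrightarrow>
     (\<forall>\<rho>\<in>{0..1}. \<forall>x\<in>X. \<forall>y\<in>X. \<forall>z. norm z \<le> 1 \<longrightarrow>
        \<rho> *\<^sub>R x + (1 - \<rho>) *\<^sub>R y + ((\<rho> * (1 - \<rho>) * \<alpha> * (norm (x - y))\<^sup>2) / 2) *\<^sub>R z \<in> X)"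

text \<open>Local smoothness estimate ell(x,y); g is the gradient of f.\<close>
definition ell :: "('a::euclidean_space \<Rightarrow> real) \<Rightarrow> ('a \<Rightarrow> 'a) \<Rightarrow> 'a \<Rightarrow> 'a \<Rightarrow> real" where
  "ell f g x y = (if x = y then 0
      else 2 * \<bar>f y - f x - g x \<bullet> (y - x)\<bar> / (norm (y - x))\<^sup>2)"

text \<open>Short step size of the closed-loop FW subroutine with gamma_max = 1.
  A quotient with zero denominator (only possible when L_t = 0 or d_t = 0) is read
  as +infinity, so the minimum equals gamma_max = 1 (when d_t = 0 the step is void).\<close>
definition fw_gamma :: "real \<Rightarrow> 'a::euclidean_space \<Rightarrow> 'a \<Rightarrow> real" where
  "fw_gamma Lt gr d = (if Lt * (norm d)\<^sup>2 = 0 then 1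
      else min ((gr \<bullet> d) / (Lt * (norm d)\<^sup>2)) 1)"

text \<open>A run of AC-FW with the closed-loop Frank-Wolfe subroutine: x_{-1} = xm1,
  iterates x t, FW vertices v t, smoothness estimates Lt t, damping sequence r.\<close>
definition acfw_run ::
  "'a::euclidean_space set \<Rightarrow> ('a \<Rightarrow> real) \<Rightarrow> ('a \<Rightarrow> 'a) \<Rightarrow> (nat \<Rightarrow> real) \<Rightarrow>
   'a \<Rightarrow> (nat \<Rightarrow> 'a) \<Rightarrow> (nat \<Rightarrow> 'a) \<Rightarrow> (nat \<Rightarrow> real) \<Rightarrow> bool" where
  "acfw_run A f g r xm1 x v Lt \<longleftrightarrow>
     xm1 \<in> A \<and>
     x 0 \<in> A \<and> (\<forall>u\<in>A. g xm1 \<bullet> x 0 \<le> g xm1 \<bullet> u) \<and>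
     Lt 0 = ell f g xm1 (x 0) \<and>
     (\<forall>t. v t \<in> A \<and> (\<forall>u\<in>A. g (x t) \<bullet> v t \<le> g (x t) \<bullet> u) \<and>
        (let d = x t - v t;
             \<gamma> = fw_gamma (Lt t) (g (x t)) d;
             xb = x t - \<gamma> *\<^sub>R d
         in Lt (Suc t) = max (ell f g (x t) xb) (r t * Lt t) \<and>
            x (Suc t) = (if f xb < f (x t) then xb else x t)))"

definition condition_D :: "(nat \<Rightarrow> real) \<Rightarrow> bool" where
  "condition_D r \<longleftrightarrow> (\<forall>t. 0 < r t \<and> r t \<le> 1) \<and>
     (\<exists>p. 0 < p \<and> p \<le> 1 \<and> (\<lambda>N. \<Prod>t<N. r t) \<longlonglongrightarrow> p)"

text \<open>I_eta = {t. L_{t+1} <= eta L_t}; G = {t. gamma_max >= 1 or gamma_t < gamma_max}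
  with gamma_max = 1 always, hence G = all of nat.\<close>
definition I_eta :: "real \<Rightarrow> (nat \<Rightarrow> real) \<Rightarrow> nat set" where
  "I_eta \<eta> Lt = {t. Lt (Suc t) \<le> \<eta> * Lt t}"

definition G_set :: "nat set" where
  "G_set = {t::nat. (1::real) \<ge> 1}"

end

theory Submission imports Defs begin

lemma grad_ineq:
  fixes f :: "'a::euclidean_space \<Rightarrow> real"
  assumes cv: "convex_on UNIV f" and fg: "\<And>y. (f has_derivative (\<lambda>h. g y \<bullet> h)) (at y)"
  shows "f x + g x \<bullet> (y - x) \<le> f y"
proof -
  define \<phi> where "\<phi> t = f (x + t *\<^sub>R (y - x))" for t :: real
  have "convex_on UNIV \<phi>"
  proof (rule convex_onI)
    fix t a b :: real assume t: "0 < t" "t < 1"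
    have "x + ((1 - t) * a + t * b) *\<^sub>R (y - x) = (1 - t) *\<^sub>R (x + a *\<^sub>R (y - x)) + t *\<^sub>R (x + b *\<^sub>R (y - x))"
      by (simp add: algebra_simps)
    then show "\<phi> ((1 - t) *\<^sub>R a + t *\<^sub>R b) \<le> (1 - t) * \<phi> a + t * \<phi> b"
      unfolding \<phi>_def using t convex_onD[OF cv, of t "x + a *\<^sub>R (y - x)" "x + b *\<^sub>R (y - x)"] by simp
  qed simp
  moreover have "(\<phi> has_field_derivative (g x \<bullet> (y - x))) (at 0)"
  proof -
    have d1: "((\<lambda>t::real. x + t *\<^sub>R (y - x)) has_derivative (\<lambda>t. t *\<^sub>R (y - x))) (at 0)"
      by (auto intro!: derivative_eq_intros)
    have "((\<lambda>t. f (x + t *\<^sub>R (y - x))) has_derivative (\<lambda>t. g x \<bullet> (t *\<^sub>R (y - x)))) (at 0)"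
      using has_derivative_compose[OF d1, of f "\<lambda>h. g x \<bullet> h"] fg[of x] by (simp add: o_def)
    moreover have "(\<lambda>t. t * (g x \<bullet> (y - x))) = (*) (g x \<bullet> (y - x))" by (auto simp: mult.commute)
    ultimately show ?thesis unfolding has_field_derivative_def \<phi>_def by simp
  qed
  ultimately have "\<phi> 1 - \<phi> 0 \<ge> (g x \<bullet> (y - x)) * (1 - 0)"
    by (intro convex_on_imp_above_tangent[where A=UNIV]) auto
  then show ?thesis unfolding \<phi>_def by simp
qed

lemma descent:
  fixes f :: "'a::euclidean_space \<Rightarrow> real"
  assumes fg: "\<And>y. (f has_derivative (\<lambda>h. g y \<bullet> h)) (at y)"
    and lip: "\<And>y z. norm (g y - g z) \<le> L * norm (y - z)" and L0: "L \<ge> 0"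
  shows "\<bar>f y - f x - g x \<bullet> (y - x)\<bar> \<le> L * (norm (y - x))\<^sup>2"
proof -
  have "norm (f y - f x - g x \<bullet> (y - x)) \<le> norm (y - x) * (L * norm (y - x))"
  proof (rule differentiable_bound_linearization[where S="closed_segment x y" and f'="\<lambda>z h. g z \<bullet> h"])
    show "\<And>t. t \<in> {0..1} \<Longrightarrow> x + t *\<^sub>R (y - x) \<in> closed_segment x y"
    proof -
      fix t :: real assume t: "t \<in> {0..1}"
      have "x + t *\<^sub>R (y - x) = (1 - t) *\<^sub>R x + t *\<^sub>R y" by (simp add: algebra_simps)
      then show "x + t *\<^sub>R (y - x) \<in> closed_segment x y" using t
        unfolding closed_segment_def by auto
    qed
    show "\<And>z. z \<in> closed_segment x y \<Longrightarrow> (f has_derivative (\<lambda>h. g z \<bullet> h)) (at z within closed_segment x y)"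
      using fg has_derivative_at_withinI by blast
    show "x \<in> closed_segment x y" by simp
    fix z assume z: "z \<in> closed_segment x y"
    have "onorm ((\<lambda>h. g z \<bullet> h) - (\<lambda>h. g x \<bullet> h)) \<le> norm (g z - g x)"
    proof (rule onorm_le)
      fix h show "norm (((\<lambda>h. g z \<bullet> h) - (\<lambda>h. g x \<bullet> h)) h) \<le> norm (g z - g x) * norm h"
        using norm_cauchy_schwarz[of "g z - g x" h] Cauchy_Schwarz_ineq2[of "g z - g x" h]
        by (simp add: inner_diff_left)
    qed
    also have "\<dots> \<le> L * norm (z - x)" by (rule lip)
    also have "\<dots> \<le> L * norm (y - x)"
    proof -
      have "norm (z - x) \<le> norm (y - x)" using z
        by (metis dist_commute dist_in_closed_segment dist_norm)
      then show ?thesis using L0 by (simp add: mult_left_mono)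
    qed
    finally show "onorm ((\<lambda>h. g z \<bullet> h) - (\<lambda>h. g x \<bullet> h)) \<le> L * norm (y - x)" .
  qed
  then show ?thesis by (simp add: power2_eq_square mult_ac)
qed

theorem lemma10:
  fixes A :: "'a::euclidean_space set"
    and f :: "'a \<Rightarrow> real" and g :: "'a \<Rightarrow> 'a"
    and L \<alpha> \<eta> :: real and r :: "nat \<Rightarrow> real"
    and xm1 xstar :: 'a and x v :: "nat \<Rightarrow> 'a" and Lt :: "nat \<Rightarrow> real"
  assumes A_compact: "compact A"
    and alpha_pos: "\<alpha> > 0"
    and X_sc: "strongly_convex_set \<alpha> (convex hull A)"
    and f_convex: "convex_on UNIV f"
    and f_grad: "\<And>y. (f has_derivative (\<lambda>h. g y \<bullet> h)) (at y)"
    and L_pos: "L > 0"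
    and g_lip: "\<And>y z. norm (g y - g z) \<le> L * norm (y - z)"
    and xstar_opt: "xstar \<in> convex hull A" "\<And>y. y \<in> convex hull A \<Longrightarrow> f xstar \<le> f y"
    and damping: "condition_D r"
    and run: "acfw_run A f g r xm1 x v Lt"
    and eta: "1 < \<eta>" "\<eta> < 2"
  shows "(\<forall>s s'. s \<in> G_set \<inter> I_eta \<eta> Lt \<longrightarrow> s' \<in> G_set \<inter> I_eta \<eta> Lt \<longrightarrow> s < s' \<longrightarrow>
            (\<forall>u. s < u \<and> u < s' \<longrightarrow> u \<notin> G_set \<inter> I_eta \<eta> Lt) \<longrightarrow>
            f (x s') - f xstar \<le>
              max (\<eta> / 2) (1 - (1 - \<eta> / 2) * \<alpha> * norm (g (x s)) / (8 * L))
                * (f (x s) - f xstar))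
       \<and> (\<forall>\<mu>>0. (\<forall>y z. f z \<ge> f y + g y \<bullet> (z - y) + \<mu> / 2 * (norm (z - y))\<^sup>2) \<longrightarrow>
           (\<forall>s s'. s \<in> G_set \<inter> I_eta \<eta> Lt \<longrightarrow> s' \<in> G_set \<inter> I_eta \<eta> Lt \<longrightarrow> s < s' \<longrightarrow>
            (\<forall>u. s < u \<and> u < s' \<longrightarrow> u \<notin> G_set \<inter> I_eta \<eta> Lt) \<longrightarrow>
            f (x s') - f xstar \<le>
              max (\<eta> / 2) (1 - (1 - \<eta> / 2) * \<alpha> * sqrt (\<mu> * (f (x s) - f xstar))
                                  / (8 * sqrt 2 * L))
                * (f (x s) - f xstar)))"
proof -
  define d where "d t = x t - v t" for t
  define \<gamma> where "\<gamma> t = fw_gamma (Lt t) (g (x t)) (d t)" for t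
  define xb where "xb t = x t - \<gamma> t *\<^sub>R d t" for t
  have x0: "x 0 \<in> A" and Lt0: "Lt 0 = ell f g xm1 (x 0)"
    using run unfolding acfw_run_def by auto
  have vA: "v t \<in> A" and vmin: "\<And>u. u \<in> A \<Longrightarrow> g (x t) \<bullet> v t \<le> g (x t) \<bullet> u"
    and LtS: "Lt (Suc t) = max (ell f g (x t) (xb t)) (r t * Lt t)"
    and xS: "x (Suc t) = (if f (xb t) < f (x t) then xb t else x t)" for t
    using run unfolding acfw_run_def Let_def d_def \<gamma>_def xb_def by auto
  have r01: "0 < r t" "r t \<le> 1" for t using damping unfolding condition_D_def by auto
  have hullmin: "g (x t) \<bullet> v t \<le> g (x t) \<bullet> w" if "w \<in> convex hull A" for t w
  proof -
    have "convex hull A \<subseteq> {w. g (x t) \<bullet> v t \<le> g (x t) \<bullet> w}"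
      by (rule hull_minimal) (auto intro: vmin convex_halfspace_ge)
    then show ?thesis using that by auto
  qed
  have ell_nn: "0 \<le> ell f g a b" for a b unfolding ell_def by auto
  have ell_le: "ell f g a b \<le> 2 * L" for a b
  proof (cases "a = b")
    case False
    then have n: "(norm (b - a))\<^sup>2 > 0" by simp
    have "\<bar>f b - f a - g a \<bullet> (b - a)\<bar> \<le> L * (norm (b - a))\<^sup>2"
      by (rule descent[OF f_grad g_lip]) (use L_pos in simp)
    then show ?thesis using False n unfolding ell_def by (simp add: divide_le_eq)
  qed (simp add: ell_def L_pos less_imp_le)
  have Lt_nn: "0 \<le> Lt t" for t
  proof (induction t)
    case 0 then show ?case using Lt0 ell_nn by simp
  next
    case (Suc t) then show ?case using LtS[of t] ell_nn[of "x t" "xb t"] by (simp add: le_max_iff_disj)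
  qed
  have Lt_le: "Lt t \<le> 2 * L" for t
  proof (induction t)
    case 0 then show ?case using Lt0 ell_le by simp
  next
    case (Suc t)
    have "r t * Lt t \<le> Lt t" using r01[of t] Lt_nn[of t] by (simp add: mult_left_le_one_le)
    then show ?case using LtS[of t] ell_le[of "x t" "xb t"] Suc by simp
  qed
  have gam: "0 \<le> \<gamma> t \<and> \<gamma> t \<le> 1" if "x t \<in> convex hull A" for t
  proof -
    have gd: "0 \<le> g (x t) \<bullet> d t" using hullmin[OF that, of t] by (simp add: d_def inner_diff_right)
    show ?thesis
    proof (cases "Lt t * (norm (d t))\<^sup>2 = 0")
      case True then show ?thesis by (simp add: \<gamma>_def fw_gamma_def)
    next
      case False
      then have "Lt t * (norm (d t))\<^sup>2 > 0" using Lt_nn[of t] by (simp add: order_less_le)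
      then show ?thesis using False gd by (simp add: \<gamma>_def fw_gamma_def)
    qed
  qed
  have xhull: "x t \<in> convex hull A" for t
  proof (induction t)
    case 0 then show ?case using x0 by (rule hull_inc)
  next
    case (Suc t)
    have "xb t = (1 - \<gamma> t) *\<^sub>R x t + \<gamma> t *\<^sub>R v t" by (simp add: xb_def d_def algebra_simps)
    moreover have "v t \<in> convex hull A" using vA by (rule hull_inc)
    moreover have "(1 - \<gamma> t) *\<^sub>R x t + \<gamma> t *\<^sub>R v t \<in> convex hull A"
      using gam[OF Suc] by (intro convexD[OF convex_convex_hull] Suc \<open>v t \<in> convex hull A\<close>) auto
    ultimately have "xb t \<in> convex hull A" by simp
    then show ?case using xS[of t] Suc by simp
  qed
  have monoS: "f (x (Suc t)) \<le> f (x t)" for t using xS[of t] by auto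
  have monoxb: "f (x (Suc t)) \<le> f (xb t)" for t using xS[of t] by auto
  have mono: "f (x n') \<le> f (x n)" if "n \<le> n'" for n n'
    using lift_Suc_antimono_le[of "\<lambda>n. f (x n)", OF monoS that] .
  have core: "f (x (Suc s)) - f xstar \<le>
              max (\<eta> / 2) (1 - (1 - \<eta> / 2) * \<alpha> * norm (g (x s)) / (8 * L)) * (f (x s) - f xstar)"
    if sI: "s \<in> I_eta \<eta> Lt" for s
  proof -
    define G where "G = g (x s)"
    define gd where "gd = G \<bullet> d s"
    define h where "h = f (x s) - f xstar"
    define M where "M = max (\<eta> / 2) (1 - (1 - \<eta> / 2) * \<alpha> * norm G / (8 * L))"
    have h0: "0 \<le> h" using xstar_opt(2)[OF xhull[of s]] by (simp add: h_def)
    have M0: "\<eta> / 2 \<le> M" "1 - (1 - \<eta> / 2) * \<alpha> * norm G / (8 * L) \<le> M" by (auto simp: M_def)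
    have gdh: "h \<le> gd"
    proof -
      have "f (x s) + G \<bullet> (xstar - x s) \<le> f xstar" unfolding G_def by (rule grad_ineq[OF f_convex f_grad])
      moreover have "G \<bullet> v s \<le> G \<bullet> xstar" unfolding G_def by (rule hullmin[OF xstar_opt(1)])
      ultimately show ?thesis by (simp add: h_def gd_def d_def inner_diff_right)
    qed
    have sc: "\<alpha> * norm G * (norm (d s))\<^sup>2 / 4 \<le> gd"
    proof (cases "G = 0")
      case True then show ?thesis using gdh h0 by simp
    next
      case False
      define z where "z = - (1 / norm G) *\<^sub>R G"
      have nz: "norm z \<le> 1" using False by (simp add: z_def)
      have Gz: "G \<bullet> z = - norm G" using False by (simp add: z_def power2_norm_eq_inner[symmetric] power2_eq_square)
      define w where "w = (1/2) *\<^sub>R x s + (1 - 1/2) *\<^sub>R v s + ((1/2 * (1 - 1/2) * \<alpha> * (norm (x s - v s))\<^sup>2) / 2) *\<^sub>R z"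
      have vh: "v s \<in> convex hull A" using vA[of s] by (rule hull_inc)
      have "w \<in> convex hull A" unfolding w_def
        by (rule X_sc[unfolded strongly_convex_set_def, rule_format, OF _ xhull[of s] vh nz]) simp
      from hullmin[OF this, of s] have "G \<bullet> v s \<le> G \<bullet> w" by (simp add: G_def)
      also have "G \<bullet> w = (G \<bullet> x s) / 2 + (G \<bullet> v s) / 2 - \<alpha> * (norm (d s))\<^sup>2 / 8 * norm G"
        unfolding w_def by (simp add: inner_add_right Gz d_def algebra_simps)
      finally show ?thesis by (simp add: gd_def d_def inner_diff_right algebra_simps)
    qed
    have desc: "f (xb s) \<le> f (x s) - \<gamma> s * gd + \<eta> * Lt s * (\<gamma> s)\<^sup>2 * (norm (d s))\<^sup>2 / 2"
    proof -
      have e1: "f (xb s) - f (x s) - G \<bullet> (xb s - x s) \<le> Lt (Suc s) / 2 * (norm (xb s - x s))\<^sup>2"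
      proof (cases "xb s = x s")
        case True then show ?thesis by simp
      next
        case False
        then have n: "(norm (xb s - x s))\<^sup>2 > 0" by simp
        have "2 * (f (xb s) - f (x s) - G \<bullet> (xb s - x s)) / (norm (xb s - x s))\<^sup>2 \<le> ell f g (x s) (xb s)"
        proof -
          have "2 * (f (xb s) - f (x s) - G \<bullet> (xb s - x s)) \<le> 2 * \<bar>f (xb s) - f (x s) - G \<bullet> (xb s - x s)\<bar>"
            by (rule mult_left_mono[OF abs_ge_self]) simp
          then show ?thesis using False unfolding ell_def G_def
            by (simp add: divide_right_mono)
        qed
        also have "\<dots> \<le> Lt (Suc s)" using LtS[of s] by simp
        finally show ?thesis using n by (simp add: divide_le_eq)
      qed
      have "Lt (Suc s) \<le> \<eta> * Lt s" using sI by (simp add: I_eta_def)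
      then have "Lt (Suc s) / 2 * (norm (xb s - x s))\<^sup>2 \<le> \<eta> * Lt s / 2 * (norm (xb s - x s))\<^sup>2"
        by (intro mult_right_mono) auto
      moreover have "(norm (xb s - x s))\<^sup>2 = (\<gamma> s)\<^sup>2 * (norm (d s))\<^sup>2"
        by (simp add: xb_def power_mult_distrib)
      moreover have "G \<bullet> (xb s - x s) = - \<gamma> s * gd" by (simp add: xb_def gd_def)
      ultimately show ?thesis using e1 by (simp add: algebra_simps)
    qed
    have fin: "f (xb s) - f xstar \<le> M * h"
    proof (cases "Lt s * (norm (d s))\<^sup>2 = 0")
      case True
      then have "\<gamma> s = 1" by (simp add: \<gamma>_def fw_gamma_def)
      have e0: "\<eta> * Lt s * (\<gamma> s)\<^sup>2 * (norm (d s))\<^sup>2 / 2 = 0" using True by auto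
      have e1: "\<gamma> s * gd = gd" using \<open>\<gamma> s = 1\<close> by simp
      have "f (xb s) \<le> f (x s) - gd" using desc e0 e1 by linarith
      then have "f (xb s) - f xstar \<le> 0" using gdh by (simp add: h_def)
      moreover have "0 \<le> M * h" using M0 h0 eta by simp
      ultimately show ?thesis by linarith
    next
      case False
      define Q where "Q = Lt s * (norm (d s))\<^sup>2"
      have Q0: "Q > 0" using False Lt_nn[of s] by (simp add: Q_def order_less_le)
      have gq: "\<gamma> s = min (gd / Q) 1" using False by (simp add: \<gamma>_def fw_gamma_def Q_def gd_def G_def)
      have gd0: "0 \<le> gd" using gdh h0 by simp
      have "\<gamma> s * Q \<le> gd" using Q0 gq by (auto simp: min_def field_simps)
      then have "\<eta> / 2 * \<gamma> s * (\<gamma> s * Q) \<le> \<eta> / 2 * \<gamma> s * gd"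
        using gam[OF xhull[of s]] eta by (intro mult_left_mono) auto
      moreover have "\<eta> * Lt s * (\<gamma> s)\<^sup>2 * (norm (d s))\<^sup>2 / 2 = \<eta> / 2 * \<gamma> s * (\<gamma> s * Q)"
        unfolding Q_def by (simp add: power2_eq_square mult_ac)
      ultimately have "\<eta> * Lt s * (\<gamma> s)\<^sup>2 * (norm (d s))\<^sup>2 / 2 \<le> \<eta> / 2 * \<gamma> s * gd" by linarith
      then have d2: "f (xb s) \<le> f (x s) - (1 - \<eta> / 2) * (\<gamma> s * gd)" using desc by (simp add: algebra_simps)
      show ?thesis
      proof (cases "gd / Q \<le> 1")
        case False
        then have "\<gamma> s = 1" using gq by simp
        moreover have "(1 - \<eta> / 2) * h \<le> (1 - \<eta> / 2) * gd" using gdh eta by (intro mult_left_mono) auto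
        ultimately have "f (xb s) - f xstar \<le> h - (1 - \<eta> / 2) * h"
          using d2 by (simp add: h_def)
        also have "\<dots> = \<eta> / 2 * h" by (simp add: algebra_simps)
        also have "\<dots> \<le> M * h" using M0 h0 by (intro mult_right_mono) auto
        finally show ?thesis .
      next
        case True
        then have gs: "\<gamma> s = gd / Q" using gq by simp
        have "h * (\<alpha> * norm G / (8 * L)) \<le> \<gamma> s * gd"
        proof (cases "d s = 0")
          case True then show ?thesis using False by simp
        next
          case dn: False
          have nd: "(norm (d s))\<^sup>2 > 0" using dn by simp
          have Qle: "Q \<le> 2 * L * (norm (d s))\<^sup>2" unfolding Q_def using Lt_le[of s] nd by simp
          have "h * (\<alpha> * norm G / (8 * L)) = (h * (\<alpha> * norm G * (norm (d s))\<^sup>2 / 4)) / (2 * L * (norm (d s))\<^sup>2)"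
            using nd L_pos by (simp add: field_simps)
          also have "\<dots> \<le> (gd * gd) / (2 * L * (norm (d s))\<^sup>2)"
            using sc gdh h0 nd L_pos alpha_pos by (intro divide_right_mono mult_mono) auto
          also have "\<dots> \<le> (gd * gd) / Q"
            using Q0 Qle gd0 by (intro divide_left_mono) auto
          also have "\<dots> = \<gamma> s * gd" using gs by simp
          finally show ?thesis .
        qed
        then have mm: "(1 - \<eta> / 2) * (h * (\<alpha> * norm G / (8 * L))) \<le> (1 - \<eta> / 2) * (\<gamma> s * gd)"
          using eta by (intro mult_left_mono) auto
        have eqR: "(1 - (1 - \<eta> / 2) * \<alpha> * norm G / (8 * L)) * h = h - (1 - \<eta> / 2) * (h * (\<alpha> * norm G / (8 * L)))"
          using L_pos by (simp add: field_simps)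
        have "f (xb s) - f xstar \<le> (1 - (1 - \<eta> / 2) * \<alpha> * norm G / (8 * L)) * h"
          using d2 mm eqR h_def by linarith
        also have "\<dots> \<le> M * h" using M0 h0 by (intro mult_right_mono) auto
        finally show ?thesis .
      qed
    qed
    show ?thesis using fin monoxb[of s] unfolding M_def h_def G_def by linarith
  qed
  have part1: "f (x s') - f xstar \<le>
              max (\<eta> / 2) (1 - (1 - \<eta> / 2) * \<alpha> * norm (g (x s)) / (8 * L)) * (f (x s) - f xstar)"
    if "s \<in> I_eta \<eta> Lt" "s < s'" for s s'
    using core[OF that(1)] mono[of "Suc s" s'] that(2) by simp
  have part2: "f (x s') - f xstar \<le>
              max (\<eta> / 2) (1 - (1 - \<eta> / 2) * \<alpha> * sqrt (\<mu> * (f (x s) - f xstar))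
                                  / (8 * sqrt 2 * L))
                * (f (x s) - f xstar)"
    if mu: "\<mu> > 0" and scf: "\<forall>y z. f z \<ge> f y + g y \<bullet> (z - y) + \<mu> / 2 * (norm (z - y))\<^sup>2"
      and sI: "s \<in> I_eta \<eta> Lt" and ss: "s < s'" for \<mu> s s'
  proof -
    define G where "G = g (x s)"
    define h where "h = f (x s) - f xstar"
    define n where "n = norm (xstar - x s)"
    have h0: "0 \<le> h" using xstar_opt(2)[OF xhull[of s]] by (simp add: h_def)
    have e1: "f xstar \<ge> f (x s) + G \<bullet> (xstar - x s) + \<mu> / 2 * n\<^sup>2"
      using scf[rule_format, of "x s" xstar] unfolding G_def n_def .
    have e2: "- (G \<bullet> (xstar - x s)) \<le> norm G * n"
      using norm_cauchy_schwarz[of "- G" "xstar - x s"] unfolding n_def by simp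
    have e3: "2 * \<mu> * (norm G * n - \<mu> / 2 * n\<^sup>2) \<le> (norm G)\<^sup>2"
    proof -
      have "0 \<le> (\<mu> * n - norm G)\<^sup>2" by simp
      then show ?thesis by (simp add: power2_eq_square algebra_simps)
    qed
    have "h \<le> norm G * n - \<mu> / 2 * n\<^sup>2" using e1 e2 unfolding h_def by linarith
    then have "2 * \<mu> * h \<le> 2 * \<mu> * (norm G * n - \<mu> / 2 * n\<^sup>2)" using mu by (intro mult_left_mono) auto
    with e3 have "2 * \<mu> * h \<le> (norm G)\<^sup>2" by linarith
    then have "\<mu> * h \<le> 2 * (norm G)\<^sup>2" using zero_le_power2[of "norm G"] by linarith
    then have "sqrt (\<mu> * h) \<le> sqrt (2 * (norm G)\<^sup>2)" by (rule real_sqrt_le_mono)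
    also have "\<dots> = sqrt 2 * norm G" by (simp add: real_sqrt_mult)
    finally have sq: "sqrt (\<mu> * h) \<le> sqrt 2 * norm G" .
    define c where "c = (1 - \<eta> / 2) * \<alpha> / (8 * L)"
    have c0: "0 \<le> c" unfolding c_def using eta alpha_pos L_pos by simp
    have T2: "(1 - \<eta> / 2) * \<alpha> * sqrt (\<mu> * h) / (8 * sqrt 2 * L) = c * (sqrt (\<mu> * h) / sqrt 2)"
      unfolding c_def by (simp add: field_simps)
    have T1: "(1 - \<eta> / 2) * \<alpha> * norm G / (8 * L) = c * norm G"
      unfolding c_def by (simp add: field_simps)
    have "sqrt (\<mu> * h) / sqrt 2 \<le> norm G" using sq by (simp add: divide_le_eq mult.commute)
    then have "c * (sqrt (\<mu> * h) / sqrt 2) \<le> c * norm G" using c0 by (rule mult_left_mono)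
    then have "max (\<eta> / 2) (1 - (1 - \<eta> / 2) * \<alpha> * norm G / (8 * L))
        \<le> max (\<eta> / 2) (1 - (1 - \<eta> / 2) * \<alpha> * sqrt (\<mu> * h) / (8 * sqrt 2 * L))"
      unfolding T1 T2 by simp
    then have "max (\<eta> / 2) (1 - (1 - \<eta> / 2) * \<alpha> * norm G / (8 * L)) * h
        \<le> max (\<eta> / 2) (1 - (1 - \<eta> / 2) * \<alpha> * sqrt (\<mu> * h) / (8 * sqrt 2 * L)) * h"
      using h0 by (rule mult_right_mono)
    then show ?thesis using part1[OF sI ss] unfolding G_def h_def by linarith
  qed
  show ?thesis
  proof (intro conjI allI impI)
    fix s s' :: nat
    assume "s \<in> G_set \<inter> I_eta \<eta> Lt" "s < s'"
    then show "f (x s') - f xstar \<le>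
              max (\<eta> / 2) (1 - (1 - \<eta> / 2) * \<alpha> * norm (g (x s)) / (8 * L)) * (f (x s) - f xstar)"
      using part1 by simp
  next
    fix \<mu> :: real and s s' :: nat
    assume "\<mu> > 0" "\<forall>y z. f z \<ge> f y + g y \<bullet> (z - y) + \<mu> / 2 * (norm (z - y))\<^sup>2"
      "s \<in> G_set \<inter> I_eta \<eta> Lt" "s < s'"
    then show "f (x s') - f xstar \<le>
              max (\<eta> / 2) (1 - (1 - \<eta> / 2) * \<alpha> * sqrt (\<mu> * (f (x s) - f xstar))
                                  / (8 * sqrt 2 * L))
                * (f (x s) - f xstar)"
      using part2 by simp
  qed
qed

end
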